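(* Let $\mathcal G$ be a braided stability groupoid, $R$ a commutative ring, $V$ a $U\mathcal G$-module and $d\in\mathbb N$. If $\mathrm{coker}\,V$ is generated in ranks $\le d-1$, then $V$ is generated in ranks $\le d$.
   Context: Stability groupoid: monoidal groupoid $(\mathcal G,\oplus,0)$ with objects $(\mathbb N,+,0)$, $G_n=\mathrm{Aut}(n)$, $\oplus\colon G_m\times G_n\to G_{m+n}$ injective, $G_0$ trivial, $(G_{l+m}\times1)\cap(1\times G_{m+n})=1\times G_m\times1$ in $G_{l+m+n}$; braided: with braiding $b_{m,n}\in G_{m+n}$. $U\mathcal G$: objects $\mathbb N$, $\mathrm{Hom}(m,n)=G_n/G_{n-m}$ for $m\le n$ ($G_{n-m}\subset G_n$ via $g\mapsto g\oplus\mathrm{id}_m$), empty otherwise, composition $fG_l\circ gG_m=f(\mathrm{id}_l\oplus g)G_{l+m}$, monoidal via $f_1G_{m_1}\oplus f_2G_{m_2}=(f_1\oplus f_2)(\mathrm{id}_{m_1}\oplus b^{-1}_{n_1,m_2}\oplus\mathrm{id}_{n_2})G_{m_1+m_2}$; $0$ initial, $\iota_n\colon0\to n$. A $U\mathcal G$-module is a functor $V\colon U\mathcal G\to R\text{-Mod}$; it is generated in ranks $\le m$ if it is a quotient of $\bigoplus_jR\mathrm{Hom}(m_j,-)$ with all $m_j\le m$. $\mathrm{coker}\,V$ is the cokernel of the natural map $V\to V(1\oplus-)$ with components $V(\iota_1\oplus\mathrm{id}_n)$. *)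

theory Defs
  imports "HOL-Algebra.Algebra"
begin

section \<open>Braided stability groupoids (strict monoidal, objects = (nat,+,0))\<close>

text \<open>G n is the automorphism group Aut(n) = G_n; T m n g h is g \<oplus> h in G_(m+n);
  b m n is the braiding b_(m,n) in G_(m+n). Group product f \<otimes> g means f \<circ> g.\<close>

definition braided_stability_groupoid ::
  "(nat \<Rightarrow> 'g monoid) \<Rightarrow> (nat \<Rightarrow> nat \<Rightarrow> 'g \<Rightarrow> 'g \<Rightarrow> 'g) \<Rightarrow> (nat \<Rightarrow> nat \<Rightarrow> 'g) \<Rightarrow> bool" where
  "braided_stability_groupoid G T b \<longleftrightarrow>
     (\<forall>n. group (G n)) \<and>
     (\<forall>m n. (\<lambda>(g, h). T m n g h) \<in> hom (G m \<times>\<times> G n) (G (m + n))) \<and>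
     (\<forall>m n. inj_on (\<lambda>(g, h). T m n g h) (carrier (G m) \<times> carrier (G n))) \<and>
     carrier (G 0) = {\<one>\<^bsub>G 0\<^esub>} \<and>
     (\<forall>l m n. \<forall>f\<in>carrier (G l). \<forall>g\<in>carrier (G m). \<forall>h\<in>carrier (G n).
        T (l + m) n (T l m f g) h = T l (m + n) f (T m n g h)) \<and>
     (\<forall>n. \<forall>g\<in>carrier (G n). T 0 n \<one>\<^bsub>G 0\<^esub> g = g \<and> T n 0 g \<one>\<^bsub>G 0\<^esub> = g) \<and>
     (\<forall>l m n.
        (\<lambda>g. T (l + m) n g \<one>\<^bsub>G n\<^esub>) ` carrier (G (l + m))
        \<inter> (\<lambda>h. T l (m + n) \<one>\<^bsub>G l\<^esub> h) ` carrier (G (m + n))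
        = (\<lambda>g. T l (m + n) \<one>\<^bsub>G l\<^esub> (T m n g \<one>\<^bsub>G n\<^esub>)) ` carrier (G m)) \<and>
     (\<forall>m n. b m n \<in> carrier (G (m + n))) \<and>
     (\<forall>m n. \<forall>g\<in>carrier (G m). \<forall>h\<in>carrier (G n).
        b m n \<otimes>\<^bsub>G (m + n)\<^esub> T m n g h = T n m h g \<otimes>\<^bsub>G (m + n)\<^esub> b m n) \<and>
     (\<forall>l m n. b l (m + n) =
        T m (l + n) \<one>\<^bsub>G m\<^esub> (b l n) \<otimes>\<^bsub>G (l + m + n)\<^esub> T (l + m) n (b l m) \<one>\<^bsub>G n\<^esub>) \<and>
     (\<forall>l m n. b (l + m) n =
        T (n + l) m (b l n) \<one>\<^bsub>G m\<^esub> \<otimes>\<^bsub>G (l + m + n)\<^esub> T l (m + n) \<one>\<^bsub>G l\<^esub> (b m n))"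

definition stab :: "(nat \<Rightarrow> 'g monoid) \<Rightarrow> (nat \<Rightarrow> nat \<Rightarrow> 'g \<Rightarrow> 'g \<Rightarrow> 'g) \<Rightarrow> nat \<Rightarrow> nat \<Rightarrow> 'g set" where
  "stab G T m n = (\<lambda>g. T (n - m) m g \<one>\<^bsub>G m\<^esub>) ` carrier (G (n - m))"

definition uhom :: "(nat \<Rightarrow> 'g monoid) \<Rightarrow> (nat \<Rightarrow> nat \<Rightarrow> 'g \<Rightarrow> 'g \<Rightarrow> 'g) \<Rightarrow> nat \<Rightarrow> nat \<Rightarrow> 'g set set" where
  "uhom G T m n = (if m \<le> n then {f <#\<^bsub>G n\<^esub> stab G T m n | f. f \<in> carrier (G n)} else {})"

definition urep :: "(nat \<Rightarrow> 'g monoid) \<Rightarrow> (nat \<Rightarrow> nat \<Rightarrow> 'g \<Rightarrow> 'g \<Rightarrow> 'g) \<Rightarrow> nat \<Rightarrow> nat \<Rightarrow> 'g set \<Rightarrow> 'g" where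
  "urep G T m n \<phi> = (SOME f. f \<in> carrier (G n) \<and> \<phi> = f <#\<^bsub>G n\<^esub> stab G T m n)"

definition uid :: "(nat \<Rightarrow> 'g monoid) \<Rightarrow> (nat \<Rightarrow> nat \<Rightarrow> 'g \<Rightarrow> 'g \<Rightarrow> 'g) \<Rightarrow> nat \<Rightarrow> 'g set" where
  "uid G T n = \<one>\<^bsub>G n\<^esub> <#\<^bsub>G n\<^esub> stab G T n n"

text \<open>Composition of \<phi> : l \<rightarrow> m and \<psi> : m \<rightarrow> n:  fG_(n-m) \<circ> gG_(m-l) = f (id_(n-m) \<oplus> g) G_(n-l).\<close>
definition ucomp :: "(nat \<Rightarrow> 'g monoid) \<Rightarrow> (nat \<Rightarrow> nat \<Rightarrow> 'g \<Rightarrow> 'g \<Rightarrow> 'g) \<Rightarrow> nat \<Rightarrow> nat \<Rightarrow> nat \<Rightarrow> 'g set \<Rightarrow> 'g set \<Rightarrow> 'g set" where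
  "ucomp G T l m n \<psi> \<phi> =
     (urep G T m n \<psi> \<otimes>\<^bsub>G n\<^esub> T (n - m) m \<one>\<^bsub>G (n - m)\<^esub> (urep G T l m \<phi>)) <#\<^bsub>G n\<^esub> stab G T l n"

text \<open>Monoidal product of \<phi>1 : a1 \<rightarrow> c1 and \<phi>2 : a2 \<rightarrow> c2 (m_i = c_i - a_i, n_i = a_i):
  f1G_m1 \<oplus> f2G_m2 = (f1 \<oplus> f2)(id_m1 \<oplus> b^-1_(n1,m2) \<oplus> id_n2) G_(m1+m2).\<close>
definition utens :: "(nat \<Rightarrow> 'g monoid) \<Rightarrow> (nat \<Rightarrow> nat \<Rightarrow> 'g \<Rightarrow> 'g \<Rightarrow> 'g) \<Rightarrow> (nat \<Rightarrow> nat \<Rightarrow> 'g)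
     \<Rightarrow> nat \<Rightarrow> nat \<Rightarrow> nat \<Rightarrow> nat \<Rightarrow> 'g set \<Rightarrow> 'g set \<Rightarrow> 'g set" where
  "utens G T b a1 c1 a2 c2 \<phi>1 \<phi>2 =
     (T c1 c2 (urep G T a1 c1 \<phi>1) (urep G T a2 c2 \<phi>2) \<otimes>\<^bsub>G (c1 + c2)\<^esub>
      T ((c1 - a1) + (a1 + (c2 - a2))) a2
        (T (c1 - a1) (a1 + (c2 - a2)) \<one>\<^bsub>G (c1 - a1)\<^esub> (inv\<^bsub>G (a1 + (c2 - a2))\<^esub> (b a1 (c2 - a2))))
        \<one>\<^bsub>G a2\<^esub>)
     <#\<^bsub>G (c1 + c2)\<^esub> stab G T (a1 + a2) (c1 + c2)"

definition uiota :: "(nat \<Rightarrow> 'g monoid) \<Rightarrow> (nat \<Rightarrow> nat \<Rightarrow> 'g \<Rightarrow> 'g \<Rightarrow> 'g) \<Rightarrow> nat \<Rightarrow> 'g set" where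
  "uiota G T n = \<one>\<^bsub>G n\<^esub> <#\<^bsub>G n\<^esub> stab G T 0 n"

definition lin_map :: "('r, 'c) ring_scheme \<Rightarrow> ('r, 'a, 'd) module_scheme \<Rightarrow> ('r, 'b, 'e) module_scheme
     \<Rightarrow> ('a \<Rightarrow> 'b) \<Rightarrow> bool" where
  "lin_map R M N f \<longleftrightarrow> f \<in> carrier M \<rightarrow> carrier N \<and>
     (\<forall>x\<in>carrier M. \<forall>y\<in>carrier M. f (x \<oplus>\<^bsub>M\<^esub> y) = f x \<oplus>\<^bsub>N\<^esub> f y) \<and>
     (\<forall>r\<in>carrier R. \<forall>x\<in>carrier M. f (r \<odot>\<^bsub>M\<^esub> x) = r \<odot>\<^bsub>N\<^esub> f x)"

text \<open>A UG-module: a functor UG \<rightarrow> R-Mod, given by objects V n and actions Vm m n \<phi> for \<phi> \<in> Hom(m,n).\<close>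
definition ug_module :: "('r, 'c) ring_scheme \<Rightarrow> (nat \<Rightarrow> 'g monoid) \<Rightarrow> (nat \<Rightarrow> nat \<Rightarrow> 'g \<Rightarrow> 'g \<Rightarrow> 'g)
     \<Rightarrow> (nat \<Rightarrow> ('r, 'v) module) \<Rightarrow> (nat \<Rightarrow> nat \<Rightarrow> 'g set \<Rightarrow> 'v \<Rightarrow> 'v) \<Rightarrow> bool" where
  "ug_module R G T V Vm \<longleftrightarrow>
     (\<forall>n. module R (V n)) \<and>
     (\<forall>m n. \<forall>\<phi>\<in>uhom G T m n. lin_map R (V m) (V n) (Vm m n \<phi>)) \<and>
     (\<forall>n. \<forall>x\<in>carrier (V n). Vm n n (uid G T n) x = x) \<and>
     (\<forall>l m n. \<forall>\<phi>\<in>uhom G T l m. \<forall>\<psi>\<in>uhom G T m n. \<forall>x\<in>carrier (V l).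
        Vm l n (ucomp G T l m n \<psi> \<phi>) x = Vm m n \<psi> (Vm l m \<phi> x))"

definition free_mod :: "('r, 'c) ring_scheme \<Rightarrow> 's set \<Rightarrow> ('r, 's \<Rightarrow> 'r) module" where
  "free_mod R S =
     \<lparr>carrier = {f \<in> S \<rightarrow>\<^sub>E carrier R. finite {s \<in> S. f s \<noteq> \<zero>\<^bsub>R\<^esub>}},
      monoid.mult = (\<lambda>_ _. undefined), monoid.one = undefined,
      ring.zero = (\<lambda>s\<in>S. \<zero>\<^bsub>R\<^esub>),
      ring.add = (\<lambda>f g. \<lambda>s\<in>S. f s \<oplus>\<^bsub>R\<^esub> g s),
      module.smult = (\<lambda>r f. \<lambda>s\<in>S. r \<otimes>\<^bsub>R\<^esub> f s)\<rparr>"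

definition free_push :: "('r, 'c) ring_scheme \<Rightarrow> 's set \<Rightarrow> 't set \<Rightarrow> ('s \<Rightarrow> 't) \<Rightarrow> ('s \<Rightarrow> 'r) \<Rightarrow> ('t \<Rightarrow> 'r)" where
  "free_push R S S' h f = (\<lambda>t\<in>S'. finsum R f {s \<in> S. h s = t \<and> f s \<noteq> \<zero>\<^bsub>R\<^esub>})"

text \<open>Basis of (\<Oplus>_(j\<in>J) R Hom(m_j, -))(n).\<close>
definition gen_basis :: "(nat \<Rightarrow> 'g monoid) \<Rightarrow> (nat \<Rightarrow> nat \<Rightarrow> 'g \<Rightarrow> 'g \<Rightarrow> 'g) \<Rightarrow> 'i set \<Rightarrow> ('i \<Rightarrow> nat) \<Rightarrow> nat
     \<Rightarrow> ('i \<times> 'g set) set" where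
  "gen_basis G T J mj n = Sigma J (\<lambda>j. uhom G T (mj j) n)"

text \<open>V is generated in ranks \<le> k: V is a quotient of \<Oplus>_(j\<in>J) R Hom(m_j, -) with all m_j \<le> k,
  i.e. there is a natural transformation from that free module which is surjective in every
  rank. The index set J has type 'i (given by the first argument). k is an integer so that
  the bound -1 (generated by nothing) is expressible.\<close>
definition gen_ranks :: "'i itself \<Rightarrow> ('r, 'c) ring_scheme \<Rightarrow> (nat \<Rightarrow> 'g monoid) \<Rightarrow> (nat \<Rightarrow> nat \<Rightarrow> 'g \<Rightarrow> 'g \<Rightarrow> 'g)
     \<Rightarrow> (nat \<Rightarrow> ('r, 'v) module) \<Rightarrow> (nat \<Rightarrow> nat \<Rightarrow> 'g set \<Rightarrow> 'v \<Rightarrow> 'v) \<Rightarrow> int \<Rightarrow> bool" where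
  "gen_ranks it R G T V Vm k \<longleftrightarrow>
     (\<exists>(J :: 'i set) (mj :: 'i \<Rightarrow> nat) (\<eta> :: nat \<Rightarrow> ('i \<times> 'g set \<Rightarrow> 'r) \<Rightarrow> 'v).
        (\<forall>j\<in>J. int (mj j) \<le> k) \<and>
        (\<forall>n. lin_map R (free_mod R (gen_basis G T J mj n)) (V n) (\<eta> n) \<and>
             \<eta> n ` carrier (free_mod R (gen_basis G T J mj n)) = carrier (V n)) \<and>
        (\<forall>n n'. \<forall>\<psi>\<in>uhom G T n n'. \<forall>f\<in>carrier (free_mod R (gen_basis G T J mj n)).
           \<eta> n' (free_push R (gen_basis G T J mj n) (gen_basis G T J mj n')
                    (\<lambda>(j, \<phi>). (j, ucomp G T (mj j) n n' \<psi> \<phi>)) f)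
           = Vm n n' \<psi> (\<eta> n f)))"

text \<open>Image of V(\<iota>_1 \<oplus> id_n) : V(n) \<rightarrow> V(1+n).\<close>
definition cok_sub :: "(nat \<Rightarrow> 'g monoid) \<Rightarrow> (nat \<Rightarrow> nat \<Rightarrow> 'g \<Rightarrow> 'g \<Rightarrow> 'g) \<Rightarrow> (nat \<Rightarrow> nat \<Rightarrow> 'g)
     \<Rightarrow> (nat \<Rightarrow> ('r, 'v) module) \<Rightarrow> (nat \<Rightarrow> nat \<Rightarrow> 'g set \<Rightarrow> 'v \<Rightarrow> 'v) \<Rightarrow> nat \<Rightarrow> 'v set" where
  "cok_sub G T b V Vm n = Vm n (1 + n) (utens G T b 0 1 n n (uiota G T 1) (uid G T n)) ` carrier (V n)"

definition cok_obj :: "(nat \<Rightarrow> 'g monoid) \<Rightarrow> (nat \<Rightarrow> nat \<Rightarrow> 'g \<Rightarrow> 'g \<Rightarrow> 'g) \<Rightarrow> (nat \<Rightarrow> nat \<Rightarrow> 'g)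
     \<Rightarrow> (nat \<Rightarrow> ('r, 'v) module) \<Rightarrow> (nat \<Rightarrow> nat \<Rightarrow> 'g set \<Rightarrow> 'v \<Rightarrow> 'v) \<Rightarrow> nat \<Rightarrow> ('r, 'v set) module" where
  "cok_obj G T b V Vm n =
     \<lparr>carrier = A_RCOSETS (V (1 + n)) (cok_sub G T b V Vm n),
      monoid.mult = (\<lambda>_ _. undefined), monoid.one = undefined,
      ring.zero = cok_sub G T b V Vm n,
      ring.add = set_add (V (1 + n)),
      module.smult = (\<lambda>r C. set_add (V (1 + n)) (cok_sub G T b V Vm n) ((\<lambda>x. r \<odot>\<^bsub>V (1 + n)\<^esub> x) ` C))\<rparr>"

text \<open>Action of \<phi> : m \<rightarrow> n on coker V, induced by V(id_1 \<oplus> \<phi>).\<close>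
definition cok_mor :: "(nat \<Rightarrow> 'g monoid) \<Rightarrow> (nat \<Rightarrow> nat \<Rightarrow> 'g \<Rightarrow> 'g \<Rightarrow> 'g) \<Rightarrow> (nat \<Rightarrow> nat \<Rightarrow> 'g)
     \<Rightarrow> (nat \<Rightarrow> ('r, 'v) module) \<Rightarrow> (nat \<Rightarrow> nat \<Rightarrow> 'g set \<Rightarrow> 'v \<Rightarrow> 'v) \<Rightarrow> nat \<Rightarrow> nat \<Rightarrow> 'g set \<Rightarrow> 'v set \<Rightarrow> 'v set" where
  "cok_mor G T b V Vm m n \<phi> C =
     (\<Union>x\<in>C. a_r_coset (V (1 + n)) (cok_sub G T b V Vm n)
               (Vm (1 + m) (1 + n) (utens G T b 1 1 m n (uid G T 1) \<phi>) x))"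

end

theory Submission
  imports Defs
begin



locale ctx =
  fixes G :: "nat \<Rightarrow> 'g monoid" and T :: "nat \<Rightarrow> nat \<Rightarrow> 'g \<Rightarrow> 'g \<Rightarrow> 'g" and b :: "nat \<Rightarrow> nat \<Rightarrow> 'g"
    and R :: "'r ring" and V :: "nat \<Rightarrow> ('r, 'v) module" and Vm :: "nat \<Rightarrow> nat \<Rightarrow> 'g set \<Rightarrow> 'v \<Rightarrow> 'v"
  assumes bsg: "braided_stability_groupoid G T b"
    and cr: "cring R"
    and ugm: "ug_module R G T V Vm"
begin

lemmas bsgD = bsg[unfolded braided_stability_groupoid_def]

lemma grp: "group (G n)" using bsgD by (elim conjE) blast

lemma gmon: "monoid (G n)" using group.is_monoid[OF grp] .
lemmas one_c = monoid.one_closed[OF gmon]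
lemmas m_c = monoid.m_closed[OF gmon]
lemmas r_one = monoid.r_one[OF gmon]
lemmas l_one = monoid.l_one[OF gmon]

lemma T_closed: "g \<in> carrier (G m) \<Longrightarrow> h \<in> carrier (G n) \<Longrightarrow> T m n g h \<in> carrier (G (m + n))"
proof -
  assume a: "g \<in> carrier (G m)" "h \<in> carrier (G n)"
  have "(\<lambda>(g, h). T m n g h) \<in> hom (G m \<times>\<times> G n) (G (m + n))"
    using bsgD by (elim conjE) blast
  then show ?thesis using a unfolding hom_def by force
qed

lemma T_closed': "g \<in> carrier (G m) \<Longrightarrow> h \<in> carrier (G n) \<Longrightarrow> k = m + n \<Longrightarrow> T m n g h \<in> carrier (G k)"
  using T_closed by simp

lemma T_one: "T m n \<one>\<^bsub>G m\<^esub> \<one>\<^bsub>G n\<^esub> = \<one>\<^bsub>G (m + n)\<^esub>"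
proof -
  have h: "(\<lambda>(g, h). T m n g h) \<in> hom (G m \<times>\<times> G n) (G (m + n))"
    using bsgD by (elim conjE) blast
  interpret gh: group_hom "G m \<times>\<times> G n" "G (m + n)" "\<lambda>(g, h). T m n g h"
    by (intro group_hom.intro group_hom_axioms.intro DirProd_group grp h)
  show ?thesis using gh.hom_one by simp
qed

lemma G0: "carrier (G 0) = {\<one>\<^bsub>G 0\<^esub>}" using bsgD by (elim conjE) blast

lemma T_unit: "g \<in> carrier (G n) \<Longrightarrow> T 0 n \<one>\<^bsub>G 0\<^esub> g = g \<and> T n 0 g \<one>\<^bsub>G 0\<^esub> = g"
  using bsgD by (elim conjE) blast

lemma b_closed: "b m n \<in> carrier (G (m + n))" using bsgD by (elim conjE) blast

lemma stab_sub: "m \<le> n \<Longrightarrow> stab G T m n \<subseteq> carrier (G n)"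
  unfolding stab_def using T_closed'[of _ "n - m" "\<one>\<^bsub>G m\<^esub>" m n] one_c by auto

lemma uhom_rep: assumes "\<phi> \<in> uhom G T m n"
  shows "m \<le> n" "urep G T m n \<phi> \<in> carrier (G n)" "\<phi> = urep G T m n \<phi> <#\<^bsub>G n\<^esub> stab G T m n"
proof -
  show mn: "m \<le> n" using assms unfolding uhom_def by (auto split: if_splits)
  have ex: "\<exists>f. f \<in> carrier (G n) \<and> \<phi> = f <#\<^bsub>G n\<^esub> stab G T m n"
    using assms mn unfolding uhom_def by auto
  show "urep G T m n \<phi> \<in> carrier (G n)" "\<phi> = urep G T m n \<phi> <#\<^bsub>G n\<^esub> stab G T m n"
    using someI_ex[OF ex] unfolding urep_def by auto
qed

lemma uhomI: "m \<le> n \<Longrightarrow> f \<in> carrier (G n) \<Longrightarrow> f <#\<^bsub>G n\<^esub> stab G T m n \<in> uhom G T m n"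
  unfolding uhom_def by auto

lemma ucomp_uhom: assumes "\<phi> \<in> uhom G T l m" "\<psi> \<in> uhom G T m n"
  shows "ucomp G T l m n \<psi> \<phi> \<in> uhom G T l n"
proof -
  note a = uhom_rep[OF assms(1)] uhom_rep[OF assms(2)]
  have "T (n - m) m \<one>\<^bsub>G (n - m)\<^esub> (urep G T l m \<phi>) \<in> carrier (G n)"
    by (rule T_closed') (use a one_c in auto)
  then show ?thesis unfolding ucomp_def using a
    by (intro uhomI) (auto intro: m_c)
qed

lemma uid_uhom: "uid G T n \<in> uhom G T n n"
  unfolding uid_def by (intro uhomI) (auto intro: one_c)

lemma uiota_uhom: "uiota G T n \<in> uhom G T 0 n"
  unfolding uiota_def by (intro uhomI) (auto intro: one_c)

lemma stab_nn: "stab G T n n = {\<one>\<^bsub>G n\<^esub>}"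
  unfolding stab_def using G0 T_unit[of "\<one>\<^bsub>G n\<^esub>" n] one_c by simp

lemma uid_eq: "uid G T n = {\<one>\<^bsub>G n\<^esub>}"
  unfolding uid_def stab_nn l_coset_def using one_c l_one by auto

lemma urep_uid: "urep G T n n (uid G T n) = \<one>\<^bsub>G n\<^esub>"
proof -
  have "urep G T n n (uid G T n) \<in> carrier (G n)" "uid G T n = urep G T n n (uid G T n) <#\<^bsub>G n\<^esub> stab G T n n"
    using uhom_rep[OF uid_uhom] by auto
  then show ?thesis unfolding stab_nn uid_eq l_coset_def using r_one by auto
qed

lemma ucomp_uid: assumes "\<phi> \<in> uhom G T m k" shows "ucomp G T m m k \<phi> (uid G T m) = \<phi>"
proof -
  note a = uhom_rep[OF assms]
  have e: "k - m + m = k" using a by simp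
  have "T (k - m) m \<one>\<^bsub>G (k - m)\<^esub> \<one>\<^bsub>G m\<^esub> = \<one>\<^bsub>G k\<^esub>" using T_one[of "k - m" m] e by simp
  then show ?thesis unfolding ucomp_def urep_uid using a r_one by simp
qed

end



definition ind :: "('r,'c) ring_scheme \<Rightarrow> 's set \<Rightarrow> 's \<Rightarrow> ('s \<Rightarrow> 'r)" where
  "ind R B a = (\<lambda>s\<in>B. if s = a then \<one>\<^bsub>R\<^esub> else \<zero>\<^bsub>R\<^esub>)"

lemma free_carrier: "f \<in> carrier (free_mod R B) \<longleftrightarrow> f \<in> B \<rightarrow>\<^sub>E carrier R \<and> finite {s\<in>B. f s \<noteq> \<zero>\<^bsub>R\<^esub>}"
  by (simp add: free_mod_def)
lemma free_add: "f \<oplus>\<^bsub>free_mod R B\<^esub> g = (\<lambda>s\<in>B. f s \<oplus>\<^bsub>R\<^esub> g s)" by (simp add: free_mod_def)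
lemma free_smult: "r \<odot>\<^bsub>free_mod R B\<^esub> f = (\<lambda>s\<in>B. r \<otimes>\<^bsub>R\<^esub> f s)" by (simp add: free_mod_def)
lemma free_zero: "\<zero>\<^bsub>free_mod R B\<^esub> = (\<lambda>s\<in>B. \<zero>\<^bsub>R\<^esub>)" by (simp add: free_mod_def)

context cring begin

lemma free_add_closed: assumes "f \<in> carrier (free_mod R B)" "g \<in> carrier (free_mod R B)"
  shows "f \<oplus>\<^bsub>free_mod R B\<^esub> g \<in> carrier (free_mod R B)"
proof -
  have "{s\<in>B. f s \<oplus> g s \<noteq> \<zero>} \<subseteq> {s\<in>B. f s \<noteq> \<zero>} \<union> {s\<in>B. g s \<noteq> \<zero>}"
    using assms by (auto simp: free_carrier)
  then show ?thesis using assms unfolding free_carrier free_add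
    by (auto intro: finite_subset simp: PiE_iff)
qed

lemma free_smult_closed: assumes "f \<in> carrier (free_mod R B)" "r \<in> carrier R"
  shows "r \<odot>\<^bsub>free_mod R B\<^esub> f \<in> carrier (free_mod R B)"
proof -
  have "{s\<in>B. r \<otimes> f s \<noteq> \<zero>} \<subseteq> {s\<in>B. f s \<noteq> \<zero>}"
    using assms by (auto simp: free_carrier)
  then show ?thesis using assms unfolding free_carrier free_smult
    by (auto intro: finite_subset simp: PiE_iff)
qed

lemma free_zero_closed: "\<zero>\<^bsub>free_mod R B\<^esub> \<in> carrier (free_mod R B)"
  unfolding free_carrier free_zero by auto

lemma ind_closed: "ind R B a \<in> carrier (free_mod R B)"
proof -
  have "{s\<in>B. ind R B a s \<noteq> \<zero>} \<subseteq> {a}" unfolding ind_def by auto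
  then show ?thesis unfolding free_carrier by (auto intro: finite_subset simp: ind_def)
qed

lemma free_induct:
  assumes f: "f \<in> carrier (free_mod R B)"
    and z: "P (\<zero>\<^bsub>free_mod R B\<^esub>)"
    and st: "\<And>g a c. g \<in> carrier (free_mod R B) \<Longrightarrow> P g \<Longrightarrow> a \<in> B \<Longrightarrow> c \<in> carrier R \<Longrightarrow>
              P (g \<oplus>\<^bsub>free_mod R B\<^esub> (c \<odot>\<^bsub>free_mod R B\<^esub> ind R B a))"
  shows "P f"
proof -
  have "\<forall>f\<in>carrier (free_mod R B). {s\<in>B. f s \<noteq> \<zero>} \<subseteq> XS \<longrightarrow> P f" if "finite XS" for XS
    using that
  proof (induction XS rule: finite_induct)
    case empty
    show ?case
    proof (intro ballI impI)
      fix f assume a: "f \<in> carrier (free_mod R B)" "{s \<in> B. f s \<noteq> \<zero>} \<subseteq> {}"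
      have "f = \<zero>\<^bsub>free_mod R B\<^esub>" unfolding free_zero
        using a by (auto simp: free_carrier PiE_iff extensional_def)
      then show "P f" using z by simp
    qed
  next
    case (insert a XS)
    show ?case
    proof (intro ballI impI)
      fix f assume a: "f \<in> carrier (free_mod R B)" "{s \<in> B. f s \<noteq> \<zero>} \<subseteq> insert a XS"
      show "P f"
      proof (cases "a \<in> B \<and> f a \<noteq> \<zero>")
        case False
        then have "{s \<in> B. f s \<noteq> \<zero>} \<subseteq> XS" using a(2) by auto
        then show ?thesis using insert.IH a(1) by blast
      next
        case True
        define g where "g = (\<lambda>s\<in>B. if s = a then \<zero> else f s)"
        have fc: "f \<in> B \<rightarrow>\<^sub>E carrier R" "finite {s\<in>B. f s \<noteq> \<zero>}" using a(1) by (auto simp: free_carrier)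
        have gsub: "{s\<in>B. g s \<noteq> \<zero>} \<subseteq> {s\<in>B. f s \<noteq> \<zero>}" unfolding g_def by auto
        have gfin: "finite {s\<in>B. g s \<noteq> \<zero>}" using finite_subset[OF gsub fc(2)] .
        have gc: "g \<in> carrier (free_mod R B)" unfolding free_carrier
          using fc gfin by (auto simp: g_def PiE_iff)
        have "{s\<in>B. g s \<noteq> \<zero>} \<subseteq> XS" using a(2) unfolding g_def by auto
        then have Pg: "P g" using insert.IH gc by blast
        have fa: "f a \<in> carrier R" using fc True by auto
        have eq: "f = g \<oplus>\<^bsub>free_mod R B\<^esub> (f a \<odot>\<^bsub>free_mod R B\<^esub> ind R B a)"
        proof
          fix s show "f s = (g \<oplus>\<^bsub>free_mod R B\<^esub> (f a \<odot>\<^bsub>free_mod R B\<^esub> ind R B a)) s"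
            using fc fa True unfolding free_add free_smult g_def ind_def
            by (auto simp: PiE_iff extensional_def)
        qed
        show ?thesis by (subst eq) (rule st[OF gc Pg _ fa], use True in blast)
      qed
    qed
  qed
  then show ?thesis using f by (auto simp: free_carrier)
qed

end

lemma lin_map_closed: "lin_map R M N f \<Longrightarrow> x \<in> carrier M \<Longrightarrow> f x \<in> carrier N"
  unfolding lin_map_def by blast
lemma lin_map_add: "lin_map R M N f \<Longrightarrow> x \<in> carrier M \<Longrightarrow> y \<in> carrier M \<Longrightarrow> f (x \<oplus>\<^bsub>M\<^esub> y) = f x \<oplus>\<^bsub>N\<^esub> f y"
  unfolding lin_map_def by blast
lemma lin_map_smult: "lin_map R M N f \<Longrightarrow> r \<in> carrier R \<Longrightarrow> x \<in> carrier M \<Longrightarrow> f (r \<odot>\<^bsub>M\<^esub> x) = r \<odot>\<^bsub>N\<^esub> f x"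
  unfolding lin_map_def by blast

lemma lin_map_zero: assumes "module R M" "module R N" "lin_map R M N f"
  shows "f \<zero>\<^bsub>M\<^esub> = \<zero>\<^bsub>N\<^esub>"
proof -
  interpret M: module R M by fact
  interpret N: module R N by fact
  have "f \<zero>\<^bsub>M\<^esub> = f (\<zero>\<^bsub>R\<^esub> \<odot>\<^bsub>M\<^esub> \<zero>\<^bsub>M\<^esub>)" by simp
  also have "\<dots> = \<zero>\<^bsub>R\<^esub> \<odot>\<^bsub>N\<^esub> f \<zero>\<^bsub>M\<^esub>" by (rule lin_map_smult[OF assms(3)]) auto
  also have "\<dots> = \<zero>\<^bsub>N\<^esub>" using lin_map_closed[OF assms(3) M.zero_closed] by simp
  finally show ?thesis .
qed

lemma lin_map_finsum: assumes "module R M" "module R N" "lin_map R M N f" "finite A" "g \<in> A \<rightarrow> carrier M"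
  shows "f (finsum M g A) = finsum N (\<lambda>i. f (g i)) A"
  using assms(4,5)
proof (induction A rule: finite_induct)
  case empty
  interpret M: module R M by fact
  interpret N: module R N by fact
  show ?case using lin_map_zero[OF assms(1-3)] by simp
next
  case (insert x F)
  interpret M: module R M by fact
  interpret N: module R N by fact
  have "f (g x) \<in> carrier N" using insert lin_map_closed[OF assms(3)] by auto
  moreover have "(\<lambda>i. f (g i)) \<in> F \<rightarrow> carrier N" using insert lin_map_closed[OF assms(3)] by auto
  ultimately show ?case using insert lin_map_add[OF assms(3)] by (simp add: M.finsum_closed)
qed

definition etaF :: "('r,'c) ring_scheme \<Rightarrow> ('r,'v,'d) module_scheme \<Rightarrow> 's set \<Rightarrow> ('s \<Rightarrow> 'v) \<Rightarrow> ('s \<Rightarrow> 'r) \<Rightarrow> 'v" where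
  "etaF R M B val f = (\<Oplus>\<^bsub>M\<^esub> s\<in>{s\<in>B. f s \<noteq> \<zero>\<^bsub>R\<^esub>}. f s \<odot>\<^bsub>M\<^esub> val s)"

context module begin

lemma etaF_sup: assumes "val \<in> B \<rightarrow> carrier M" "f \<in> carrier (free_mod R B)" "finite XS"
   "{s\<in>B. f s \<noteq> \<zero>} \<subseteq> XS" "XS \<subseteq> B"
  shows "etaF R M B val f = (\<Oplus>\<^bsub>M\<^esub> s\<in>XS. f s \<odot>\<^bsub>M\<^esub> val s)"
  unfolding etaF_def
proof (rule M.add.finprod_mono_neutral_cong_left)
  show "finite XS" by fact
  show "{s\<in>B. f s \<noteq> \<zero>} \<subseteq> XS" by fact
  show "\<And>i. i \<in> XS - {s\<in>B. f s \<noteq> \<zero>} \<Longrightarrow> f i \<odot>\<^bsub>M\<^esub> val i = \<zero>\<^bsub>M\<^esub>"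
    using assms by (auto intro!: smult_l_null)
  show "\<And>x. x \<in> {s\<in>B. f s \<noteq> \<zero>} \<Longrightarrow> f x \<odot>\<^bsub>M\<^esub> val x = f x \<odot>\<^bsub>M\<^esub> val x" by simp
  show "(\<lambda>s. f s \<odot>\<^bsub>M\<^esub> val s) \<in> XS \<rightarrow> carrier M"
    using assms by (auto simp: free_carrier PiE_iff intro!: smult_closed)
qed

lemma etaF_closed: assumes "val \<in> B \<rightarrow> carrier M" "f \<in> carrier (free_mod R B)"
  shows "etaF R M B val f \<in> carrier M"
  unfolding etaF_def using assms by (intro M.finsum_closed) (auto simp: free_carrier PiE_iff)

lemma etaF_lin: assumes "val \<in> B \<rightarrow> carrier M"
  shows "lin_map R (free_mod R B) M (etaF R M B val)"
  unfolding lin_map_def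
proof (intro conjI ballI)
  show "etaF R M B val \<in> carrier (free_mod R B) \<rightarrow> carrier M"
    using etaF_closed[OF assms] by auto
next
  fix f g assume f: "f \<in> carrier (free_mod R B)" and g: "g \<in> carrier (free_mod R B)"
  define XS where "XS = {s\<in>B. f s \<noteq> \<zero>} \<union> {s\<in>B. g s \<noteq> \<zero>}"
  have fc: "f \<in> B \<rightarrow>\<^sub>E carrier R" "finite {s\<in>B. f s \<noteq> \<zero>}" using f by (auto simp: free_carrier)
  have gc: "g \<in> B \<rightarrow>\<^sub>E carrier R" "finite {s\<in>B. g s \<noteq> \<zero>}" using g by (auto simp: free_carrier)
  have XS: "finite XS" "XS \<subseteq> B" unfolding XS_def using fc gc by auto
  have fg: "f \<oplus>\<^bsub>free_mod R B\<^esub> g \<in> carrier (free_mod R B)" by (rule free_add_closed[OF f g])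
  have "etaF R M B val (f \<oplus>\<^bsub>free_mod R B\<^esub> g) = (\<Oplus>\<^bsub>M\<^esub> s\<in>XS. (f \<oplus>\<^bsub>free_mod R B\<^esub> g) s \<odot>\<^bsub>M\<^esub> val s)"
    by (rule etaF_sup[OF assms fg XS(1) _ XS(2)]) (auto simp: XS_def free_add)
  also have "\<dots> = (\<Oplus>\<^bsub>M\<^esub> s\<in>XS. f s \<odot>\<^bsub>M\<^esub> val s \<oplus>\<^bsub>M\<^esub> g s \<odot>\<^bsub>M\<^esub> val s)"
    using XS fc gc assms by (intro M.finsum_cong') (auto simp: free_add smult_l_distr PiE_iff Pi_iff subsetD)
  also have "\<dots> = (\<Oplus>\<^bsub>M\<^esub> s\<in>XS. f s \<odot>\<^bsub>M\<^esub> val s) \<oplus>\<^bsub>M\<^esub> (\<Oplus>\<^bsub>M\<^esub> s\<in>XS. g s \<odot>\<^bsub>M\<^esub> val s)"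
    using XS fc gc assms by (intro M.finsum_addf) (auto simp: PiE_iff intro!: smult_closed)
  also have "\<dots> = etaF R M B val f \<oplus>\<^bsub>M\<^esub> etaF R M B val g"
    using etaF_sup[OF assms f XS(1) _ XS(2)] etaF_sup[OF assms g XS(1) _ XS(2)] by (simp add: XS_def)
  finally show "etaF R M B val (f \<oplus>\<^bsub>free_mod R B\<^esub> g) = etaF R M B val f \<oplus>\<^bsub>M\<^esub> etaF R M B val g" .
next
  fix r f assume r: "r \<in> carrier R" and f: "f \<in> carrier (free_mod R B)"
  define XS where "XS = {s\<in>B. f s \<noteq> \<zero>}"
  have fc: "f \<in> B \<rightarrow>\<^sub>E carrier R" "finite {s\<in>B. f s \<noteq> \<zero>}" using f by (auto simp: free_carrier)
  have XS: "finite XS" "XS \<subseteq> B" unfolding XS_def using fc by auto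
  have rf: "r \<odot>\<^bsub>free_mod R B\<^esub> f \<in> carrier (free_mod R B)" by (rule free_smult_closed[OF f r])
  have "etaF R M B val (r \<odot>\<^bsub>free_mod R B\<^esub> f) = (\<Oplus>\<^bsub>M\<^esub> s\<in>XS. (r \<odot>\<^bsub>free_mod R B\<^esub> f) s \<odot>\<^bsub>M\<^esub> val s)"
    by (rule etaF_sup[OF assms rf XS(1) _ XS(2)]) (use r fc in \<open>auto simp: XS_def free_smult PiE_iff\<close>)
  also have "\<dots> = (\<Oplus>\<^bsub>M\<^esub> s\<in>XS. r \<odot>\<^bsub>M\<^esub> (f s \<odot>\<^bsub>M\<^esub> val s))"
    using XS fc assms r by (intro M.finsum_cong') (auto simp: free_smult smult_assoc1 PiE_iff Pi_iff subsetD intro!: smult_closed)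
  also have "\<dots> = r \<odot>\<^bsub>M\<^esub> (\<Oplus>\<^bsub>M\<^esub> s\<in>XS. f s \<odot>\<^bsub>M\<^esub> val s)"
    using XS fc assms r by (intro finsum_smult_ldistr[symmetric]) (auto simp: PiE_iff)
  also have "\<dots> = r \<odot>\<^bsub>M\<^esub> etaF R M B val f"
    using etaF_sup[OF assms f XS(1) _ XS(2)] by (simp add: XS_def)
  finally show "etaF R M B val (r \<odot>\<^bsub>free_mod R B\<^esub> f) = r \<odot>\<^bsub>M\<^esub> etaF R M B val f" .
qed

lemma etaF_ind: assumes "val \<in> B \<rightarrow> carrier M" "a \<in> B"
  shows "etaF R M B val (ind R B a) = val a"
proof -
  have "etaF R M B val (ind R B a) = (\<Oplus>\<^bsub>M\<^esub> s\<in>{a}. ind R B a s \<odot>\<^bsub>M\<^esub> val s)"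
    by (rule etaF_sup[OF assms(1) ind_closed]) (use assms in \<open>auto simp: ind_def\<close>)
  also have "\<dots> = val a" using assms by (auto simp add: ind_def Pi_iff)
  finally show ?thesis .
qed

end

lemma (in cring) push_ind: assumes "a0 \<in> B0" "h a0 \<in> B"
  shows "free_push R B0 B h (ind R B0 a0) = ind R B (h a0)"
proof
  fix t
  show "free_push R B0 B h (ind R B0 a0) t = ind R B (h a0) t"
  proof (cases "t \<in> B")
    case False then show ?thesis by (simp add: free_push_def ind_def)
  next
    case True
    show ?thesis
    proof (cases "\<one> = \<zero>")
      case True
      have "{s \<in> B0. h s = t \<and> ind R B0 a0 s \<noteq> \<zero>} = {}" using True by (auto simp: ind_def)
      then show ?thesis using True \<open>t \<in> B\<close> by (simp add: free_push_def ind_def)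
    next
      case False
      have "{s \<in> B0. h s = t \<and> ind R B0 a0 s \<noteq> \<zero>} = (if h a0 = t then {a0} else {})"
        using False assms by (auto simp: ind_def)
      then show ?thesis using \<open>t \<in> B\<close> assms by (simp add: free_push_def ind_def)
    qed
  qed
qed

context module begin

lemma finsum_smult_rdistr: "finite A \<Longrightarrow> g \<in> A \<rightarrow> carrier R \<Longrightarrow> v \<in> carrier M \<Longrightarrow>
    (\<Oplus>i\<in>A. g i) \<odot>\<^bsub>M\<^esub> v = (\<Oplus>\<^bsub>M\<^esub> i\<in>A. g i \<odot>\<^bsub>M\<^esub> v)"
proof (induction A rule: finite_induct)
  case empty then show ?case by simp
next
  case (insert x F)
  then show ?case by (simp add: smult_l_distr Pi_iff)
qed

lemma etaF_push: assumes val': "val' \<in> B' \<rightarrow> carrier M" and h: "h \<in> B \<rightarrow> B'"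
    and f: "f \<in> carrier (free_mod R B)"
  shows "etaF R M B' val' (free_push R B B' h f) = (\<Oplus>\<^bsub>M\<^esub> s\<in>{s\<in>B. f s \<noteq> \<zero>}. f s \<odot>\<^bsub>M\<^esub> val' (h s))"
proof -
  define Sf where "Sf = {s\<in>B. f s \<noteq> \<zero>}"
  define Fib where "Fib t = {s\<in>B. h s = t \<and> f s \<noteq> \<zero>}" for t
  have fc: "f \<in> B \<rightarrow>\<^sub>E carrier R" "finite Sf" using f by (auto simp: free_carrier Sf_def)
  have fR: "\<And>s. s \<in> B \<Longrightarrow> f s \<in> carrier R" using fc by auto
  have Fsub: "Fib t \<subseteq> Sf" for t unfolding Fib_def Sf_def by auto
  have Ffin: "finite (Fib t)" for t using finite_subset[OF Fsub fc(2)] .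
  have P_eq: "free_push R B B' h f = (\<lambda>t\<in>B'. \<Oplus>s\<in>Fib t. f s)" unfolding free_push_def Fib_def by simp
  have hS: "h ` Sf \<subseteq> B'" using h unfolding Sf_def by auto
  have sup: "{t\<in>B'. free_push R B B' h f t \<noteq> \<zero>} \<subseteq> h ` Sf"
  proof
    fix t assume t: "t \<in> {t\<in>B'. free_push R B B' h f t \<noteq> \<zero>}"
    have "Fib t \<noteq> {}" proof assume e: "Fib t = {}" have "free_push R B B' h f t = \<zero>" unfolding P_eq using e t by simp then show False using t by simp qed
    then show "t \<in> h ` Sf" unfolding Fib_def Sf_def by auto
  qed
  have Pc: "free_push R B B' h f \<in> carrier (free_mod R B')"
    unfolding free_carrier
  proof
    show "free_push R B B' h f \<in> B' \<rightarrow>\<^sub>E carrier R"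
      unfolding P_eq by (auto intro!: finsum_closed simp: Fib_def fR)
    show "finite {t\<in>B'. free_push R B B' h f t \<noteq> \<zero>}"
      by (rule finite_subset[OF sup]) (use fc in simp)
  qed
  have "etaF R M B' val' (free_push R B B' h f) = (\<Oplus>\<^bsub>M\<^esub> t\<in>h ` Sf. free_push R B B' h f t \<odot>\<^bsub>M\<^esub> val' t)"
    by (rule etaF_sup[OF val' Pc _ sup hS]) (use fc in simp)
  also have "\<dots> = (\<Oplus>\<^bsub>M\<^esub> t\<in>h ` Sf. (\<Oplus>\<^bsub>M\<^esub> s\<in>Fib t. f s \<odot>\<^bsub>M\<^esub> val' (h s)))"
  proof (rule M.finsum_cong')
    show "h ` Sf = h ` Sf" ..
    fix t assume t: "t \<in> h ` Sf"
    have vt: "val' t \<in> carrier M" using t hS val' by auto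
    have "free_push R B B' h f t \<odot>\<^bsub>M\<^esub> val' t = (\<Oplus>s\<in>Fib t. f s) \<odot>\<^bsub>M\<^esub> val' t"
      using t hS by (auto simp: P_eq)
    also have "\<dots> = (\<Oplus>\<^bsub>M\<^esub> s\<in>Fib t. f s \<odot>\<^bsub>M\<^esub> val' t)"
      by (rule finsum_smult_rdistr[OF Ffin _ vt]) (auto simp: Fib_def fR)
    also have "\<dots> = (\<Oplus>\<^bsub>M\<^esub> s\<in>Fib t. f s \<odot>\<^bsub>M\<^esub> val' (h s))"
      using vt by (intro M.finsum_cong') (auto simp: Fib_def fR)
    finally show "free_push R B B' h f t \<odot>\<^bsub>M\<^esub> val' t = (\<Oplus>\<^bsub>M\<^esub> s\<in>Fib t. f s \<odot>\<^bsub>M\<^esub> val' (h s))" .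
  next
    show "(\<lambda>t. \<Oplus>\<^bsub>M\<^esub> s\<in>Fib t. f s \<odot>\<^bsub>M\<^esub> val' (h s)) \<in> h ` Sf \<rightarrow> carrier M"
      using h val' by (auto intro!: M.finsum_closed smult_closed simp: Fib_def fR Pi_iff)
  qed
  also have "\<dots> = (\<Oplus>\<^bsub>M\<^esub> s\<in>\<Union>(Fib ` h ` Sf). f s \<odot>\<^bsub>M\<^esub> val' (h s))"
    by (rule M.add.finprod_UN_disjoint[symmetric])
      (use fc Ffin h val' in \<open>auto simp: pairwise_def disjnt_def Fib_def fR Pi_iff\<close>)
  also have "\<Union>(Fib ` h ` Sf) = Sf" unfolding Fib_def Sf_def by auto
  finally show ?thesis unfolding Sf_def .
qed

end




lemma mem_arc: "x \<in> a_r_coset M H a \<longleftrightarrow> (\<exists>h\<in>H. x = h \<oplus>\<^bsub>M\<^esub> a)"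
  unfolding a_r_coset_def r_coset_def by auto
lemma mem_sa: "x \<in> set_add M A B \<longleftrightarrow> (\<exists>a\<in>A. \<exists>c\<in>B. x = a \<oplus>\<^bsub>M\<^esub> c)"
  unfolding set_add_def set_mult_def by auto
lemma mem_arcs: "C \<in> A_RCOSETS M H \<longleftrightarrow> (\<exists>a\<in>carrier M. C = a_r_coset M H a)"
  unfolding A_RCOSETS_def RCOSETS_def a_r_coset_def by auto

context ctx begin

lemma utens_uhom: assumes "\<phi>1 \<in> uhom G T a1 c1" "\<phi>2 \<in> uhom G T a2 c2"
  shows "utens G T b a1 c1 a2 c2 \<phi>1 \<phi>2 \<in> uhom G T (a1 + a2) (c1 + c2)"
proof -
  note r1 = uhom_rep[OF assms(1)] and r2 = uhom_rep[OF assms(2)]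
  have x1: "T c1 c2 (urep G T a1 c1 \<phi>1) (urep G T a2 c2 \<phi>2) \<in> carrier (G (c1 + c2))"
    using T_closed r1 r2 by blast
  have inner: "inv\<^bsub>G (a1 + (c2 - a2))\<^esub> (b a1 (c2 - a2)) \<in> carrier (G (a1 + (c2 - a2)))"
    using group.inv_closed[OF grp b_closed] .
  have y: "T (c1 - a1) (a1 + (c2 - a2)) \<one>\<^bsub>G (c1 - a1)\<^esub> (inv\<^bsub>G (a1 + (c2 - a2))\<^esub> (b a1 (c2 - a2)))
      \<in> carrier (G ((c1 - a1) + (a1 + (c2 - a2))))"
    using T_closed one_c inner by blast
  have z: "T ((c1 - a1) + (a1 + (c2 - a2))) a2
        (T (c1 - a1) (a1 + (c2 - a2)) \<one>\<^bsub>G (c1 - a1)\<^esub> (inv\<^bsub>G (a1 + (c2 - a2))\<^esub> (b a1 (c2 - a2))))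
        \<one>\<^bsub>G a2\<^esub> \<in> carrier (G (c1 + c2))"
    by (rule T_closed'[OF y one_c]) (use r1 r2 in simp)
  show ?thesis unfolding utens_def
    by (rule uhomI) (use r1 r2 m_c[OF x1 z] in auto)
qed

lemma modV: "module R (V n)" using ugm unfolding ug_module_def by blast
lemma linV: "\<phi> \<in> uhom G T m n \<Longrightarrow> lin_map R (V m) (V n) (Vm m n \<phi>)"
  using ugm unfolding ug_module_def by blast
lemma Vid: "x \<in> carrier (V n) \<Longrightarrow> Vm n n (uid G T n) x = x"
  using ugm unfolding ug_module_def by blast
lemma Vcomp: "\<phi> \<in> uhom G T l m \<Longrightarrow> \<psi> \<in> uhom G T m n \<Longrightarrow> x \<in> carrier (V l) \<Longrightarrow>
    Vm l n (ucomp G T l m n \<psi> \<phi>) x = Vm m n \<psi> (Vm l m \<phi> x)"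
  using ugm unfolding ug_module_def by blast

lemma iota_uhom: "utens G T b 0 1 k k (uiota G T 1) (uid G T k) \<in> uhom G T k (Suc k)"
  using utens_uhom[OF uiota_uhom uid_uhom, of 1 k] by simp

lemma cok_sub_car: "cok_sub G T b V Vm m \<subseteq> carrier (V (Suc m))"
  unfolding cok_sub_def using lin_map_closed[OF linV[OF iota_uhom]] by auto

lemma zero_cok_sub: "\<zero>\<^bsub>V (Suc m)\<^esub> \<in> cok_sub G T b V Vm m"
proof -
  have "Vm m (Suc m) (utens G T b 0 1 m m (uiota G T 1) (uid G T m)) \<zero>\<^bsub>V m\<^esub> = \<zero>\<^bsub>V (Suc m)\<^esub>"
    by (rule lin_map_zero[OF modV modV linV[OF iota_uhom]])
  note e = this
  interpret M: module R "V m" by (rule modV)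
  show ?thesis unfolding cok_sub_def using M.zero_closed e by force
qed

lemma cok_car: "carrier (cok_obj G T b V Vm m) = A_RCOSETS (V (Suc m)) (cok_sub G T b V Vm m)"
  unfolding cok_obj_def by simp

lemma cok_elem_car: "C \<in> carrier (cok_obj G T b V Vm m) \<Longrightarrow> C \<subseteq> carrier (V (Suc m))"
proof -
  assume "C \<in> carrier (cok_obj G T b V Vm m)"
  then obtain a where a: "a \<in> carrier (V (Suc m))" "C = a_r_coset (V (Suc m)) (cok_sub G T b V Vm m) a"
    unfolding cok_car mem_arcs by blast
  interpret M: module R "V (Suc m)" by (rule modV)
  show ?thesis using a cok_sub_car[of m] by (auto simp: mem_arc intro!: M.add.m_closed)
qed

end

inductive_set SPg :: "(nat \<Rightarrow> 'g monoid) \<Rightarrow> (nat \<Rightarrow> nat \<Rightarrow> 'g \<Rightarrow> 'g \<Rightarrow> 'g) \<Rightarrow> 'r ring \<Rightarrow>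
   (nat \<Rightarrow> ('r, 'v) module) \<Rightarrow> (nat \<Rightarrow> nat \<Rightarrow> 'g set \<Rightarrow> 'v \<Rightarrow> 'v) \<Rightarrow> nat \<Rightarrow> nat \<Rightarrow> 'v set"
  for G T R V Vm d n where
  gen: "m \<le> d \<Longrightarrow> \<phi> \<in> uhom G T m n \<Longrightarrow> x \<in> carrier (V m) \<Longrightarrow> Vm m n \<phi> x \<in> SPg G T R V Vm d n"
| zero: "\<zero>\<^bsub>V n\<^esub> \<in> SPg G T R V Vm d n"
| add: "y \<in> SPg G T R V Vm d n \<Longrightarrow> z \<in> SPg G T R V Vm d n \<Longrightarrow> y \<oplus>\<^bsub>V n\<^esub> z \<in> SPg G T R V Vm d n"
| smul: "r \<in> carrier R \<Longrightarrow> y \<in> SPg G T R V Vm d n \<Longrightarrow> r \<odot>\<^bsub>V n\<^esub> y \<in> SPg G T R V Vm d n"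

locale ctx2 = ctx + fixes d :: nat
begin

abbreviation SP where "SP \<equiv> SPg G T R V Vm d"

lemma SP_car: "y \<in> SP n \<Longrightarrow> y \<in> carrier (V n)"
proof (induction rule: SPg.induct)
  case (gen m \<phi> x) then show ?case using lin_map_closed[OF linV] by blast
next
  case zero
  interpret M: module R "V n" by (rule modV)
  show ?case by simp
next
  case (add y z)
  interpret M: module R "V n" by (rule modV)
  show ?case using add by simp
next
  case (smul r y)
  interpret M: module R "V n" by (rule modV)
  show ?case using smul by simp
qed

lemma SP_map: assumes psi: "\<psi> \<in> uhom G T k n" and y: "y \<in> SP k" shows "Vm k n \<psi> y \<in> SP n"
  using y
proof (induction rule: SPg.induct)
  case (gen m \<phi> x)
  then show ?case using psi Vcomp[of \<phi> m k \<psi> n x] ucomp_uhom[of \<phi> m k \<psi> n] SPg.gen by metis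
next
  case zero
  then show ?case using psi lin_map_zero[OF modV modV linV] SPg.zero by metis
next
  case (add y z)
  then show ?case using psi lin_map_add[OF linV] SP_car SPg.add by metis
next
  case (smul r y)
  then show ?case using psi lin_map_smult[OF linV] SP_car SPg.smul by metis
qed

end



context ctx begin
lemma cok_add: "C \<oplus>\<^bsub>cok_obj G T b V Vm m\<^esub> D = set_add (V (Suc m)) C D"
  by (simp add: cok_obj_def)
lemma cok_smult: "r \<odot>\<^bsub>cok_obj G T b V Vm m\<^esub> C =
    set_add (V (Suc m)) (cok_sub G T b V Vm m) ((\<lambda>x. r \<odot>\<^bsub>V (Suc m)\<^esub> x) ` C)"
  by (simp add: cok_obj_def)
end

context ctx2 begin

lemma SP_add: "y \<in> SP n \<Longrightarrow> z \<in> SP n \<Longrightarrow> y \<oplus>\<^bsub>V n\<^esub> z \<in> SP n" by (rule SPg.add)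
lemma SP_smul: "r \<in> carrier R \<Longrightarrow> y \<in> SP n \<Longrightarrow> r \<odot>\<^bsub>V n\<^esub> y \<in> SP n" by (rule SPg.smul)

lemma main:
  assumes gen: "gen_ranks TYPE('i) R G T (cok_obj G T b V Vm) (cok_mor G T b V Vm) (int d - 1)"
  shows "carrier (V n) \<subseteq> SP n"
proof -
  interpret Rr: cring R by (rule cr)
  obtain J :: "'i set" and mj and \<eta> where
    Jd: "\<forall>j\<in>J. int (mj j) \<le> int d - 1"
    and lin: "\<forall>n. lin_map R (free_mod R (gen_basis G T J mj n)) (cok_obj G T b V Vm n) (\<eta> n) \<and>
             \<eta> n ` carrier (free_mod R (gen_basis G T J mj n)) = carrier (cok_obj G T b V Vm n)"
    and nat: "\<forall>n n'. \<forall>\<psi>\<in>uhom G T n n'. \<forall>f\<in>carrier (free_mod R (gen_basis G T J mj n)).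
           \<eta> n' (free_push R (gen_basis G T J mj n) (gen_basis G T J mj n')
                    (\<lambda>(j, \<phi>). (j, ucomp G T (mj j) n n' \<psi> \<phi>)) f)
           = cok_mor G T b V Vm n n' \<psi> (\<eta> n f)"
    using gen unfolding gen_ranks_def by (elim exE conjE) (rule that; assumption)
  define B where "B k = gen_basis G T J mj k" for k
  have linE: "lin_map R (free_mod R (B m)) (cok_obj G T b V Vm m) (\<eta> m)" for m
    using lin unfolding B_def by simp
  have surj: "\<eta> m ` carrier (free_mod R (B m)) = carrier (cok_obj G T b V Vm m)" for m
    using lin unfolding B_def by simp
  have Ce: "\<eta> m f \<in> carrier (cok_obj G T b V Vm m)" if "f \<in> carrier (free_mod R (B m))" for m f
    using lin_map_closed[OF linE that] .
  show ?thesis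
  proof (induction n rule: less_induct)
    case (less n)
    show ?case
    proof
      fix y assume y: "y \<in> carrier (V n)"
      show "y \<in> SP n"
      proof (cases "n \<le> d")
        case True
        have "Vm n n (uid G T n) y \<in> SP n" by (rule SPg.gen[OF True]) (use uid_uhom y in auto)
        then show ?thesis using Vid[OF y] by simp
      next
        case False
        then obtain k where nk: "n = Suc k" and dk: "d \<le> k" by (cases n) auto
        interpret M: module R "V (Suc k)" by (rule modV)
        have IHk: "carrier (V k) \<subseteq> SP k" using less nk by simp
        have csub: "cok_sub G T b V Vm k \<subseteq> SP (Suc k)"
          unfolding cok_sub_def using IHk SP_map[OF iota_uhom] by auto
        have ind_sub: "\<eta> k (ind R (B k) a) \<subseteq> SP (Suc k)" if a: "a \<in> B k" for a
        proof -
          obtain j \<phi> where a': "a = (j, \<phi>)" "j \<in> J" "\<phi> \<in> uhom G T (mj j) k"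
            using a unfolding B_def gen_basis_def by auto
          define m where "m = mj j"
          have md: "Suc m \<le> d" using Jd a' m_def by auto
          have phi: "\<phi> \<in> uhom G T m k" using a'(3) m_def by simp
          define h where "h = (\<lambda>(j', \<phi>'). (j', ucomp G T (mj j') m k \<phi> \<phi>'))"
          have a0: "(j, uid G T m) \<in> B m" unfolding B_def gen_basis_def using a' uid_uhom m_def by auto
          have ha0: "h (j, uid G T m) = a" unfolding h_def using ucomp_uid[OF phi] a' m_def by simp
          have push: "free_push R (B m) (B k) h (ind R (B m) (j, uid G T m)) = ind R (B k) a"
            using Rr.push_ind[OF a0, of h "B k"] ha0 a by simp
          have e0: "ind R (B m) (j, uid G T m) \<in> carrier (free_mod R (B m))" by (rule Rr.ind_closed)
          have eq: "\<eta> k (ind R (B k) a) = cok_mor G T b V Vm m k \<phi> (\<eta> m (ind R (B m) (j, uid G T m)))"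
            using nat[rule_format, OF phi e0[unfolded B_def]] push unfolding B_def h_def by simp
          have C0: "\<eta> m (ind R (B m) (j, uid G T m)) \<subseteq> carrier (V (Suc m))"
            using cok_elem_car Ce[OF e0] by blast
          have phi': "utens G T b 1 1 m k (uid G T 1) \<phi> \<in> uhom G T (Suc m) (Suc k)"
            using utens_uhom[OF uid_uhom phi, of 1] by simp
          show ?thesis
          proof
            fix z assume "z \<in> \<eta> k (ind R (B k) a)"
            then obtain x hh where x: "x \<in> \<eta> m (ind R (B m) (j, uid G T m))" "hh \<in> cok_sub G T b V Vm k"
              and z: "z = hh \<oplus>\<^bsub>V (Suc k)\<^esub> Vm (Suc m) (Suc k) (utens G T b 1 1 m k (uid G T 1) \<phi>) x"
              using that unfolding eq cok_mor_def by (auto simp: mem_arc)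
            have "Vm (Suc m) (Suc k) (utens G T b 1 1 m k (uid G T 1) \<phi>) x \<in> SP (Suc k)"
              by (rule SPg.gen[OF md phi']) (use x C0 in auto)
            then show "z \<in> SP (Suc k)" unfolding z using x csub by (intro SP_add) auto
          qed
        qed
        have key: "\<eta> k f \<subseteq> SP (Suc k)" if f: "f \<in> carrier (free_mod R (B k))" for f
        proof (rule Rr.free_induct[OF f])
          let ?z = "\<zero>\<^bsub>free_mod R (B k)\<^esub>"
          have zc: "?z \<in> carrier (free_mod R (B k))" by (rule Rr.free_zero_closed)
          have "?z = \<zero>\<^bsub>R\<^esub> \<odot>\<^bsub>free_mod R (B k)\<^esub> ?z" unfolding free_smult free_zero by auto
          then have ez: "\<eta> k ?z = \<zero>\<^bsub>R\<^esub> \<odot>\<^bsub>cok_obj G T b V Vm k\<^esub> \<eta> k ?z"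
            using lin_map_smult[OF linE Rr.zero_closed zc] by metis
          have zc2: "\<eta> k ?z \<subseteq> carrier (V (Suc k))" using cok_elem_car Ce[OF zc] by blast
          show "\<eta> k ?z \<subseteq> SP (Suc k)"
          proof
            fix z assume "z \<in> \<eta> k ?z"
            then obtain hh x where hx: "hh \<in> cok_sub G T b V Vm k" "x \<in> \<eta> k ?z"
              and z: "z = hh \<oplus>\<^bsub>V (Suc k)\<^esub> \<zero>\<^bsub>R\<^esub> \<odot>\<^bsub>V (Suc k)\<^esub> x"
              by (subst (asm) ez) (auto simp: cok_smult mem_sa)
            have xc: "x \<in> carrier (V (Suc k))" using hx zc2 by auto
            have hc: "hh \<in> carrier (V (Suc k))" using hx(1) cok_sub_car by auto
            have "z = hh" using z M.smult_l_null[OF xc] M.r_zero[OF hc] by simp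
            then show "z \<in> SP (Suc k)" using hx csub by auto
          qed
        next
          fix g a c assume g: "g \<in> carrier (free_mod R (B k))" and IH: "\<eta> k g \<subseteq> SP (Suc k)"
            and a: "a \<in> B k" and c: "c \<in> carrier R"
          have ea: "ind R (B k) a \<in> carrier (free_mod R (B k))" by (rule Rr.ind_closed)
          have cea: "c \<odot>\<^bsub>free_mod R (B k)\<^esub> ind R (B k) a \<in> carrier (free_mod R (B k))"
            by (rule Rr.free_smult_closed[OF ea c])
          have eq: "\<eta> k (g \<oplus>\<^bsub>free_mod R (B k)\<^esub> (c \<odot>\<^bsub>free_mod R (B k)\<^esub> ind R (B k) a)) =
              set_add (V (Suc k)) (\<eta> k g) (set_add (V (Suc k)) (cok_sub G T b V Vm k)
                 ((\<lambda>x. c \<odot>\<^bsub>V (Suc k)\<^esub> x) ` \<eta> k (ind R (B k) a)))"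
            using lin_map_add[OF linE g cea] lin_map_smult[OF linE c ea] by (simp add: cok_add cok_smult)
          show "\<eta> k (g \<oplus>\<^bsub>free_mod R (B k)\<^esub> (c \<odot>\<^bsub>free_mod R (B k)\<^esub> ind R (B k) a)) \<subseteq> SP (Suc k)"
            unfolding eq
          proof
            fix z assume "z \<in> set_add (V (Suc k)) (\<eta> k g) (set_add (V (Suc k)) (cok_sub G T b V Vm k)
                 ((\<lambda>x. c \<odot>\<^bsub>V (Suc k)\<^esub> x) ` \<eta> k (ind R (B k) a)))"
            then obtain u hh x where u: "u \<in> \<eta> k g" "hh \<in> cok_sub G T b V Vm k" "x \<in> \<eta> k (ind R (B k) a)"
              and z: "z = u \<oplus>\<^bsub>V (Suc k)\<^esub> (hh \<oplus>\<^bsub>V (Suc k)\<^esub> c \<odot>\<^bsub>V (Suc k)\<^esub> x)"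
              by (auto simp: mem_sa)
            have "u \<in> SP (Suc k)" "hh \<in> SP (Suc k)" "x \<in> SP (Suc k)"
              using u IH csub ind_sub[OF a] by auto
            then show "z \<in> SP (Suc k)" unfolding z using c by (intro SP_add SP_smul)
          qed
        qed
        let ?C = "a_r_coset (V (Suc k)) (cok_sub G T b V Vm k) y"
        have "?C \<in> carrier (cok_obj G T b V Vm k)" unfolding cok_car mem_arcs using y nk by auto
        then obtain f where f: "f \<in> carrier (free_mod R (B k))" "\<eta> k f = ?C"
          using surj[of k] by (metis imageE)
        have "y \<in> ?C" unfolding mem_arc using zero_cok_sub[of k] y nk by force
        then show "y \<in> SP n" using key[OF f(1)] f(2) nk by auto
      qed
    qed
  qed
qed

end



theorem proposition7p5:
  fixes G :: "nat \<Rightarrow> 'g monoid" and T :: "nat \<Rightarrow> nat \<Rightarrow> 'g \<Rightarrow> 'g \<Rightarrow> 'g" and b :: "nat \<Rightarrow> nat \<Rightarrow> 'g"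
    and R :: "'r ring" and V :: "nat \<Rightarrow> ('r, 'v) module" and Vm :: "nat \<Rightarrow> nat \<Rightarrow> 'g set \<Rightarrow> 'v \<Rightarrow> 'v"
    and d :: nat
  assumes "braided_stability_groupoid G T b"
    and "cring R"
    and "ug_module R G T V Vm"
    and "gen_ranks TYPE('i) R G T (cok_obj G T b V Vm) (cok_mor G T b V Vm) (int d - 1)"
  shows "gen_ranks TYPE(nat \<times> 'v) R G T V Vm (int d)"
proof -
  interpret ctx2 G T b R V Vm d unfolding ctx2_def ctx_def using assms by auto
  interpret Rr: cring R by (rule assms(2))
  have allSP: "carrier (V n) \<subseteq> SPg G T R V Vm d n" for n using main[OF assms(4)] .
  define J0 :: "(nat \<times> 'v) set" where "J0 = {(m, x). m \<le> d \<and> x \<in> carrier (V m)}"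
  define val where "val n = (\<lambda>(j, \<phi>). Vm (fst j) n \<phi> (snd j))" for n
  define eta where "eta n = etaF R (V n) (gen_basis G T J0 fst n) (val n)" for n
  have valc: "val n \<in> gen_basis G T J0 fst n \<rightarrow> carrier (V n)" for n
    unfolding val_def gen_basis_def J0_def by (auto intro: lin_map_closed[OF linV])
  have etalin: "lin_map R (free_mod R (gen_basis G T J0 fst n)) (V n) (eta n)" for n
    unfolding eta_def by (rule module.etaF_lin[OF modV valc])
  show ?thesis
    unfolding gen_ranks_def
  proof (rule exI[of _ J0], rule exI[of _ fst], rule exI[of _ eta], intro conjI allI ballI)
    fix j assume "j \<in> J0" then show "int (fst j) \<le> int d" unfolding J0_def by auto
  next
    fix n show "lin_map R (free_mod R (gen_basis G T J0 fst n)) (V n) (eta n)" by (rule etalin)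
  next
    fix n
    interpret M: module R "V n" by (rule modV)
    show "eta n ` carrier (free_mod R (gen_basis G T J0 fst n)) = carrier (V n)"
    proof
      show "eta n ` carrier (free_mod R (gen_basis G T J0 fst n)) \<subseteq> carrier (V n)"
        using lin_map_closed[OF etalin] by auto
    next
      have "y \<in> eta n ` carrier (free_mod R (gen_basis G T J0 fst n))" if "y \<in> SPg G T R V Vm d n" for y
        using that
      proof (induction rule: SPg.induct)
        case (gen m \<phi> x)
        have a: "((m, x), \<phi>) \<in> gen_basis G T J0 fst n" using gen unfolding gen_basis_def J0_def by auto
        have "eta n (ind R (gen_basis G T J0 fst n) ((m, x), \<phi>)) = Vm m n \<phi> x"
          unfolding eta_def using M.etaF_ind[OF valc a] by (simp add: val_def)
        then show ?case by (metis Rr.ind_closed rev_image_eqI)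
      next
        case zero
        have "eta n \<zero>\<^bsub>free_mod R (gen_basis G T J0 fst n)\<^esub> = \<zero>\<^bsub>V n\<^esub>"
          unfolding eta_def etaF_def free_zero by simp
        then show ?case by (metis Rr.free_zero_closed rev_image_eqI)
      next
        case (add y z)
        then obtain f g where f: "f \<in> carrier (free_mod R (gen_basis G T J0 fst n))" "y = eta n f"
          and g: "g \<in> carrier (free_mod R (gen_basis G T J0 fst n))" "z = eta n g" by blast
        have "eta n (f \<oplus>\<^bsub>free_mod R (gen_basis G T J0 fst n)\<^esub> g) = y \<oplus>\<^bsub>V n\<^esub> z"
          using lin_map_add[OF etalin f(1) g(1)] f g by simp
        then show ?case by (metis Rr.free_add_closed[OF f(1) g(1)] rev_image_eqI)
      next
        case (smul r y)
        then obtain f where f: "f \<in> carrier (free_mod R (gen_basis G T J0 fst n))" "y = eta n f" by blast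
        have "eta n (r \<odot>\<^bsub>free_mod R (gen_basis G T J0 fst n)\<^esub> f) = r \<odot>\<^bsub>V n\<^esub> y"
          using lin_map_smult[OF etalin smul(1) f(1)] f by simp
        then show ?case by (metis Rr.free_smult_closed[OF f(1) smul(1)] rev_image_eqI)
      qed
      then show "carrier (V n) \<subseteq> eta n ` carrier (free_mod R (gen_basis G T J0 fst n))"
        using allSP by blast
    qed
  next
    fix n n' \<psi> f assume psi: "\<psi> \<in> uhom G T n n'"
      and f: "f \<in> carrier (free_mod R (gen_basis G T J0 fst n))"
    interpret M: module R "V n'" by (rule modV)
    define h :: "(nat \<times> 'v) \<times> 'g set \<Rightarrow> (nat \<times> 'v) \<times> 'g set" where "h = (\<lambda>(j, \<phi>). (j, ucomp G T (fst j) n n' \<psi> \<phi>))"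
    define Sf where "Sf = {s\<in>gen_basis G T J0 fst n. f s \<noteq> \<zero>\<^bsub>R\<^esub>}"
    have fc: "f \<in> gen_basis G T J0 fst n \<rightarrow>\<^sub>E carrier R" "finite Sf"
      using f by (auto simp: free_carrier Sf_def)
    have hB: "h \<in> gen_basis G T J0 fst n \<rightarrow> gen_basis G T J0 fst n'"
      using ucomp_uhom psi by (auto simp: gen_basis_def h_def)
    have valn: "val n s \<in> carrier (V n)" if "s \<in> gen_basis G T J0 fst n" for s using valc that by auto
    have "eta n' (free_push R (gen_basis G T J0 fst n) (gen_basis G T J0 fst n') h f)
        = (\<Oplus>\<^bsub>V n'\<^esub> s\<in>Sf. f s \<odot>\<^bsub>V n'\<^esub> val n' (h s))"
      unfolding eta_def Sf_def by (rule M.etaF_push[OF valc hB f])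
    also have "\<dots> = (\<Oplus>\<^bsub>V n'\<^esub> s\<in>Sf. Vm n n' \<psi> (f s \<odot>\<^bsub>V n\<^esub> val n s))"
    proof (rule M.finsum_cong')
      fix s assume s: "s \<in> Sf"
      then obtain m x \<phi> where s': "s = ((m, x), \<phi>)" "m \<le> d" "x \<in> carrier (V m)" "\<phi> \<in> uhom G T m n"
        unfolding Sf_def gen_basis_def J0_def by auto
      have "val n' (h s) = Vm n n' \<psi> (val n s)"
        using Vcomp[OF s'(4) psi s'(3)] s' by (simp add: val_def h_def)
      moreover have "f s \<in> carrier R" using fc s Sf_def by auto
      ultimately show "f s \<odot>\<^bsub>V n'\<^esub> val n' (h s) = Vm n n' \<psi> (f s \<odot>\<^bsub>V n\<^esub> val n s)"
        using lin_map_smult[OF linV[OF psi] _ valn] s Sf_def by simp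
    next
      show "(\<lambda>s. Vm n n' \<psi> (f s \<odot>\<^bsub>V n\<^esub> val n s)) \<in> Sf \<rightarrow> carrier (V n')"
        using fc lin_map_closed[OF linV[OF psi]] module.smult_closed[OF modV] valn
        by (auto simp: Sf_def PiE_iff)
    qed simp
    also have "\<dots> = Vm n n' \<psi> (eta n f)"
      unfolding eta_def etaF_def Sf_def[symmetric]
      by (rule lin_map_finsum[OF modV modV linV[OF psi] fc(2), symmetric])
        (use fc valn module.smult_closed[OF modV] in \<open>auto simp: Sf_def PiE_iff\<close>)
    finally show "eta n' (free_push R (gen_basis G T J0 fst n) (gen_basis G T J0 fst n')
        (\<lambda>(j, \<phi>). (j, ucomp G T (fst j) n n' \<psi> \<phi>)) f) = Vm n n' \<psi> (eta n f)"
      unfolding h_def .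
  qed
qed



end
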